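(* Let $\mathcal{Q}_{\mathrm{pri}}$ be the set of isomorphism classes of prime quandles. There is a surjective ring homomorphism $$\mathbb{Z}[\mathcal{Q}_{\mathrm{pri}}]\longrightarrow\mathrm{B}(\mathcal{Q})$$ from the polynomial ring over $\mathbb{Z}$ with variables indexed by $\mathcal{Q}_{\mathrm{pri}}$ onto the Burnside ring of finite quandles, sending the variable $[P]$ to $b(P)$.
   Context: A rack is a set $R$ with a binary operation $\rhd$ such that every left multiplication $\ell_a\colon b\mapsto a\rhd b$ is a bijection and $a\rhd(b\rhd c)=(a\rhd b)\rhd(a\rhd c)$ for all $a,b,c$; a quandle is a rack with $a\rhd a=a$ for all $a$. Products are cartesian products with componentwise operation. The inner automorphism group $\mathrm{Inn}(R)$ is the subgroup of the symmetric group on $R$ generated by all $\ell_a$; a rack is connected if it is non-empty and $\mathrm{Inn}(R)$ acts transitively on $R$. A prime quandle is a finite connected quandle that is not a singleton and that is isomorphic to a product $A\times B$ of two quandles only when one of $A,B$ is a singleton. A subrack of $R$ is a subset $S$ with $\ell_s(S)=S$ for all $s\in S$; a decomposition of $R$ into $S$ and $T$ means $S,T$ are disjoint subracks (possibly empty) with $S\cup T=R$. The Burnside ring of finite quandles $\mathrm{B}(\mathcal{Q})$ is the abelian group generated by symbols $b(Q)$, one for each finite quandle $Q$, subject to $b(Q_1)=b(Q_2)$ whenever $Q_1\cong Q_2$ and $b(Q)=b(S)+b(T)$ whenever $Q$ decomposes into $S$ and $T$; it is a commutative ring with $b(Q)b(Q')=b(Q\times Q')$ and unit the class of the singleton. 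*)

theory Defs
  imports Main "HOL-Library.Poly_Mapping" "HOL-Library.Multiset" "HOL-Library.Nat_Bijection"
begin

text \<open>A (candidate) quandle structure: a carrier set of natural numbers together with a
binary operation; only its values on the carrier matter.  Every finite quandle is isomorphic
to one of this form, so these serve as the generators of the Burnside ring.\<close>
type_synonym qstr = "nat set \<times> (nat \<Rightarrow> nat \<Rightarrow> nat)"

definition is_quandle :: "nat set \<Rightarrow> (nat \<Rightarrow> nat \<Rightarrow> nat) \<Rightarrow> bool" where
  "is_quandle A op \<longleftrightarrow>
     (\<forall>a\<in>A. \<forall>b\<in>A. op a b \<in> A) \<and>
     (\<forall>a\<in>A. bij_betw (op a) A A) \<and>
     (\<forall>a\<in>A. \<forall>b\<in>A. \<forall>c\<in>A. op a (op b c) = op (op a b) (op a c)) \<and>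
     (\<forall>a\<in>A. op a a = a)"

definition fin_quandle :: "qstr \<Rightarrow> bool" where
  "fin_quandle Q \<longleftrightarrow> finite (fst Q) \<and> is_quandle (fst Q) (snd Q)"

inductive_set inn_group :: "nat set \<Rightarrow> (nat \<Rightarrow> nat \<Rightarrow> nat) \<Rightarrow> (nat \<Rightarrow> nat) set"
  for A op where
  inn_id: "id \<in> inn_group A op"
| inn_left: "g \<in> inn_group A op \<Longrightarrow> a \<in> A \<Longrightarrow> op a \<circ> g \<in> inn_group A op"
| inn_left_inv: "g \<in> inn_group A op \<Longrightarrow> a \<in> A \<Longrightarrow> inv_into A (op a) \<circ> g \<in> inn_group A op"

definition connected_rack :: "nat set \<Rightarrow> (nat \<Rightarrow> nat \<Rightarrow> nat) \<Rightarrow> bool" where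
  "connected_rack A op \<longleftrightarrow> A \<noteq> {} \<and> (\<forall>x\<in>A. \<forall>y\<in>A. \<exists>g\<in>inn_group A op. g x = y)"

definition qiso :: "qstr \<Rightarrow> qstr \<Rightarrow> bool" where
  "qiso Q Q' \<longleftrightarrow> (\<exists>f. bij_betw f (fst Q) (fst Q') \<and>
      (\<forall>a\<in>fst Q. \<forall>b\<in>fst Q. f (snd Q a b) = snd Q' (f a) (f b)))"

definition qprod :: "qstr \<Rightarrow> qstr \<Rightarrow> qstr" where
  "qprod Q Q' = (prod_encode ` (fst Q \<times> fst Q'),
     (\<lambda>x y. prod_encode (snd Q (fst (prod_decode x)) (fst (prod_decode y)),
                         snd Q' (snd (prod_decode x)) (snd (prod_decode y)))))"

definition qsingleton :: qstr where
  "qsingleton = ({0}, (\<lambda>_ _. 0))"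

definition prime_quandle :: "qstr \<Rightarrow> bool" where
  "prime_quandle Q \<longleftrightarrow> fin_quandle Q \<and> connected_rack (fst Q) (snd Q) \<and>
     \<not> is_singleton (fst Q) \<and>
     (\<forall>Q1 Q2. is_quandle (fst Q1) (snd Q1) \<and> is_quandle (fst Q2) (snd Q2) \<and>
              qiso Q (qprod Q1 Q2) \<longrightarrow> is_singleton (fst Q1) \<or> is_singleton (fst Q2))"

definition subrack :: "nat set \<Rightarrow> (nat \<Rightarrow> nat \<Rightarrow> nat) \<Rightarrow> nat set \<Rightarrow> bool" where
  "subrack A op S \<longleftrightarrow> S \<subseteq> A \<and> (\<forall>s\<in>S. op s ` S = S)"

text \<open>The subgroup of relations of the free abelian group on the generators;
  the Burnside ring B(Q) is (qstr =>0 int) modulo bnull.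
  Symbols of non-(finite quandle) structures are killed.\<close>
inductive_set bnull :: "(qstr \<Rightarrow>\<^sub>0 int) set" where
  bnull_zero: "0 \<in> bnull"
| bnull_iso: "fin_quandle Q \<Longrightarrow> fin_quandle Q' \<Longrightarrow> qiso Q Q' \<Longrightarrow>
     Poly_Mapping.single Q 1 - Poly_Mapping.single Q' 1 \<in> bnull"
| bnull_decomp: "fin_quandle (A, op) \<Longrightarrow> subrack A op S \<Longrightarrow> subrack A op T \<Longrightarrow>
     S \<inter> T = {} \<Longrightarrow> S \<union> T = A \<Longrightarrow>
     Poly_Mapping.single (A, op) 1 - Poly_Mapping.single (S, op) 1 - Poly_Mapping.single (T, op) 1 \<in> bnull"
| bnull_junk: "\<not> fin_quandle X \<Longrightarrow> Poly_Mapping.single X 1 \<in> bnull"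
| bnull_add: "x \<in> bnull \<Longrightarrow> y \<in> bnull \<Longrightarrow> x + y \<in> bnull"
| bnull_uminus: "x \<in> bnull \<Longrightarrow> - x \<in> bnull"

definition bmult :: "(qstr \<Rightarrow>\<^sub>0 int) \<Rightarrow> (qstr \<Rightarrow>\<^sub>0 int) \<Rightarrow> (qstr \<Rightarrow>\<^sub>0 int)" where
  "bmult x y = (\<Sum>Q\<in>Poly_Mapping.keys x. \<Sum>Q'\<in>Poly_Mapping.keys y.
      Poly_Mapping.single (qprod Q Q') (Poly_Mapping.lookup x Q * Poly_Mapping.lookup y Q'))"

definition bsym :: "qstr \<Rightarrow> (qstr \<Rightarrow>\<^sub>0 int)" where
  "bsym Q = Poly_Mapping.single Q 1"

definition qclass :: "qstr \<Rightarrow> qstr set" where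
  "qclass Q = {Q'. fin_quandle Q' \<and> qiso Q' Q}"

definition Qpri :: "qstr set set" where
  "Qpri = {qclass P | P. prime_quandle P}"

text \<open>Polynomial ring Z[Qpri]: integer polynomials ((variable multiset) =>0 int) whose
  variables all lie in Qpri.\<close>
definition Zpri :: "(qstr set multiset \<Rightarrow>\<^sub>0 int) set" where
  "Zpri = {p. \<forall>m\<in>Poly_Mapping.keys p. set_mset m \<subseteq> Qpri}"

definition pvar :: "qstr set \<Rightarrow> (qstr set multiset \<Rightarrow>\<^sub>0 int)" where
  "pvar v = Poly_Mapping.single {#v#} 1"

end

theory Submission
  imports Defs
begin


definition qclosed :: "qstr \<Rightarrow> bool" where
  "qclosed Q \<longleftrightarrow> (\<forall>a\<in>fst Q. \<forall>b\<in>fst Q. snd Q a b \<in> fst Q)"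

lemma qiso_refl: "qiso Q Q"
  unfolding qiso_def by (rule exI[of _ id]) auto

lemma qiso_trans: "qiso Q1 Q2 \<Longrightarrow> qiso Q2 Q3 \<Longrightarrow> qiso Q1 Q3"
  unfolding qiso_def
proof (elim exE conjE)
  fix f g assume f: "bij_betw f (fst Q1) (fst Q2)" and hf: "\<forall>a\<in>fst Q1. \<forall>b\<in>fst Q1. f (snd Q1 a b) = snd Q2 (f a) (f b)"
    and g: "bij_betw g (fst Q2) (fst Q3)" and hg: "\<forall>a\<in>fst Q2. \<forall>b\<in>fst Q2. g (snd Q2 a b) = snd Q3 (g a) (g b)"
  have "bij_betw (g \<circ> f) (fst Q1) (fst Q3)" using f g bij_betw_trans by blast
  moreover have "\<forall>a\<in>fst Q1. \<forall>b\<in>fst Q1. (g \<circ> f) (snd Q1 a b) = snd Q3 ((g \<circ> f) a) ((g \<circ> f) b)"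
  proof (intro ballI)
    fix a b assume ab: "a \<in> fst Q1" "b \<in> fst Q1"
    have "f a \<in> fst Q2" "f b \<in> fst Q2" using bij_betw_apply[OF f] ab by simp_all
    thus "(g \<circ> f) (snd Q1 a b) = snd Q3 ((g \<circ> f) a) ((g \<circ> f) b)" using hf hg ab by simp
  qed
  ultimately show "\<exists>h. bij_betw h (fst Q1) (fst Q3) \<and> (\<forall>a\<in>fst Q1. \<forall>b\<in>fst Q1. h (snd Q1 a b) = snd Q3 (h a) (h b))"
    by blast
qed

lemma qiso_sym: assumes "qiso Q1 Q2" "qclosed Q1" shows "qiso Q2 Q1"
proof -
  obtain f where f: "bij_betw f (fst Q1) (fst Q2)" and hf: "\<forall>a\<in>fst Q1. \<forall>b\<in>fst Q1. f (snd Q1 a b) = snd Q2 (f a) (f b)"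
    using assms(1) unfolding qiso_def by blast
  let ?g = "inv_into (fst Q1) f"
  have g: "bij_betw ?g (fst Q2) (fst Q1)" using f by (rule bij_betw_inv_into)
  have "?g (snd Q2 a b) = snd Q1 (?g a) (?g b)" if "a \<in> fst Q2" "b \<in> fst Q2" for a b
  proof -
    have ga: "?g a \<in> fst Q1" "?g b \<in> fst Q1" using g that by (auto simp: bij_betw_def)
    have "f (?g a) = a" "f (?g b) = b" using f that by (auto simp: bij_betw_inv_into_right)
    hence "snd Q2 a b = f (snd Q1 (?g a) (?g b))" using hf ga by auto
    moreover have "snd Q1 (?g a) (?g b) \<in> fst Q1" using assms(2) ga unfolding qclosed_def by auto
    ultimately show ?thesis using f by (simp add: bij_betw_inv_into_left)
  qed
  thus ?thesis unfolding qiso_def using g by blast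
qed

lemma qprod_fst: "fst (qprod Q Q') = prod_encode ` (fst Q \<times> fst Q')"
  by (simp add: qprod_def)

lemma qprod_snd_enc: "snd (qprod Q Q') (prod_encode (a,b)) (prod_encode (a',b')) = prod_encode (snd Q a a', snd Q' b b')"
  by (simp add: qprod_def)

lemma qprod_closed: "qclosed Q \<Longrightarrow> qclosed Q' \<Longrightarrow> qclosed (qprod Q Q')"
  unfolding qclosed_def qprod_fst by (auto simp: qprod_snd_enc)

lemma qprod_cong: assumes "qiso Q1 Q1'" "qiso Q2 Q2'" shows "qiso (qprod Q1 Q2) (qprod Q1' Q2')"
proof -
  obtain f where f: "bij_betw f (fst Q1) (fst Q1')" and hf: "\<forall>a\<in>fst Q1. \<forall>b\<in>fst Q1. f (snd Q1 a b) = snd Q1' (f a) (f b)"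
    using assms(1) unfolding qiso_def by blast
  obtain g where g: "bij_betw g (fst Q2) (fst Q2')" and hg: "\<forall>a\<in>fst Q2. \<forall>b\<in>fst Q2. g (snd Q2 a b) = snd Q2' (g a) (g b)"
    using assms(2) unfolding qiso_def by blast
  define h where "h = prod_encode \<circ> map_prod f g \<circ> prod_decode"
  have b1: "bij_betw prod_decode (prod_encode ` (fst Q1 \<times> fst Q2)) (fst Q1 \<times> fst Q2)"
  proof -
    have "bij_betw prod_decode (prod_encode ` (fst Q1 \<times> fst Q2)) (prod_decode ` prod_encode ` (fst Q1 \<times> fst Q2))"
      by (rule inj_on_imp_bij_betw[OF inj_prod_decode])
    moreover have "prod_decode ` prod_encode ` (fst Q1 \<times> fst Q2) = fst Q1 \<times> fst Q2"
      by (simp add: image_image)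
    ultimately show ?thesis by simp
  qed
  have b2: "bij_betw (map_prod f g) (fst Q1 \<times> fst Q2) (fst Q1' \<times> fst Q2')"
    using f g by (rule bij_betw_map_prod)
  have b3: "bij_betw prod_encode (fst Q1' \<times> fst Q2') (prod_encode ` (fst Q1' \<times> fst Q2'))"
    by (rule inj_on_imp_bij_betw[OF inj_prod_encode])
  have "bij_betw h (fst (qprod Q1 Q2)) (fst (qprod Q1' Q2'))"
    unfolding h_def qprod_fst using bij_betw_trans[OF bij_betw_trans[OF b1 b2] b3] by (simp add: comp_assoc)
  moreover have "h (snd (qprod Q1 Q2) x y) = snd (qprod Q1' Q2') (h x) (h y)"
    if "x \<in> fst (qprod Q1 Q2)" "y \<in> fst (qprod Q1 Q2)" for x y
    using that hf hg unfolding qprod_fst by (auto simp: h_def qprod_snd_enc)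
  ultimately show ?thesis unfolding qiso_def by blast
qed


lemma qiso_intro:
  assumes "bij_betw h (fst Q) (fst Q')"
    "\<And>a b. a \<in> fst Q \<Longrightarrow> b \<in> fst Q \<Longrightarrow> h (snd Q a b) = snd Q' (h a) (h b)"
  shows "qiso Q Q'"
  using assms unfolding qiso_def by blast

lemma qprod_assoc: "qiso (qprod (qprod Q1 Q2) Q3) (qprod Q1 (qprod Q2 Q3))"
proof (rule qiso_intro)
  define h where "h z = prod_encode (fst (prod_decode (fst (prod_decode z))),
      prod_encode (snd (prod_decode (fst (prod_decode z))), snd (prod_decode z)))" for z
  define h' where "h' z = prod_encode (prod_encode (fst (prod_decode z), fst (prod_decode (snd (prod_decode z)))),
      snd (prod_decode (snd (prod_decode z))))" for z
  show "bij_betw h (fst (qprod (qprod Q1 Q2) Q3)) (fst (qprod Q1 (qprod Q2 Q3)))"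
    by (rule bij_betw_byWitness[where f'=h']) (auto simp: qprod_fst h_def h'_def)
  show "h (snd (qprod (qprod Q1 Q2) Q3) a b) = snd (qprod Q1 (qprod Q2 Q3)) (h a) (h b)"
    if "a \<in> fst (qprod (qprod Q1 Q2) Q3)" "b \<in> fst (qprod (qprod Q1 Q2) Q3)" for a b
    using that by (auto simp: qprod_fst h_def qprod_snd_enc)
qed

lemma qprod_comm: "qiso (qprod Q1 Q2) (qprod Q2 Q1)"
proof (rule qiso_intro)
  define h where "h z = prod_encode (snd (prod_decode z), fst (prod_decode z))" for z
  show "bij_betw h (fst (qprod Q1 Q2)) (fst (qprod Q2 Q1))"
    by (rule bij_betw_byWitness[where f'=h]) (auto simp: qprod_fst h_def)
  show "h (snd (qprod Q1 Q2) a b) = snd (qprod Q2 Q1) (h a) (h b)"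
    if "a \<in> fst (qprod Q1 Q2)" "b \<in> fst (qprod Q1 Q2)" for a b
    using that by (auto simp: qprod_fst h_def qprod_snd_enc)
qed

lemma qprod_unit_left: "qiso (qprod qsingleton Q) Q"
proof (rule qiso_intro)
  define h where "h z = snd (prod_decode z)" for z
  show "bij_betw h (fst (qprod qsingleton Q)) (fst Q)"
    by (rule bij_betw_byWitness[where f'="\<lambda>z. prod_encode (0,z)"]) (auto simp: qprod_fst h_def qsingleton_def)
  show "h (snd (qprod qsingleton Q) a b) = snd Q (h a) (h b)"
    if "a \<in> fst (qprod qsingleton Q)" "b \<in> fst (qprod qsingleton Q)" for a b
    using that by (auto simp: qprod_fst h_def qprod_snd_enc qsingleton_def)
qed

lemma qprod_unit_right: "qiso (qprod Q qsingleton) Q"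
  by (rule qiso_trans[OF qprod_comm qprod_unit_left])

lemma qsingleton_fin: "fin_quandle qsingleton"
  by (auto simp: fin_quandle_def qsingleton_def is_quandle_def bij_betw_def)

lemma fin_quandle_closed: "fin_quandle Q \<Longrightarrow> qclosed Q"
  by (auto simp: fin_quandle_def is_quandle_def qclosed_def)

lemma qprod_fin:
  assumes "fin_quandle Q1" "fin_quandle Q2" shows "fin_quandle (qprod Q1 Q2)"
proof -
  obtain A op where Q1: "Q1 = (A, op)" by (cases Q1)
  obtain B op' where Q2: "Q2 = (B, op')" by (cases Q2)
  have A: "finite A" "is_quandle A op" and B: "finite B" "is_quandle B op'"
    using assms by (auto simp: fin_quandle_def Q1 Q2)
  have fin: "finite (fst (qprod Q1 Q2))" using A B by (simp add: qprod_fst Q1 Q2)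
  have bij: "bij_betw (snd (qprod Q1 Q2) x) (fst (qprod Q1 Q2)) (fst (qprod Q1 Q2))"
    if xin: "x \<in> fst (qprod Q1 Q2)" for x
  proof -
    obtain a b where x: "x = prod_encode (a,b)" "a \<in> A" "b \<in> B" using xin by (force simp: qprod_fst Q1 Q2)
    have ba: "bij_betw (op a) A A" and bb: "bij_betw (op' b) B B" using A B x by (auto simp: is_quandle_def)
    show ?thesis
    proof (rule bij_betw_byWitness[where f'="\<lambda>z. prod_encode (inv_into A (op a) (fst (prod_decode z)), inv_into B (op' b) (snd (prod_decode z)))"])
      show "\<forall>z\<in>fst (qprod Q1 Q2). prod_encode (inv_into A (op a) (fst (prod_decode (snd (qprod Q1 Q2) x z))),
         inv_into B (op' b) (snd (prod_decode (snd (qprod Q1 Q2) x z)))) = z"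
        using ba bb x by (auto simp: qprod_fst Q1 Q2 qprod_snd_enc bij_betw_inv_into_left)
      show "\<forall>z\<in>fst (qprod Q1 Q2). snd (qprod Q1 Q2) x (prod_encode (inv_into A (op a) (fst (prod_decode z)),
         inv_into B (op' b) (snd (prod_decode z)))) = z"
        using ba bb x by (auto simp: qprod_fst Q1 Q2 qprod_snd_enc bij_betw_inv_into_right)
      show "snd (qprod Q1 Q2) x ` fst (qprod Q1 Q2) \<subseteq> fst (qprod Q1 Q2)"
        using ba bb x by (auto simp: qprod_fst Q1 Q2 qprod_snd_enc bij_betw_apply)
      show "(\<lambda>z. prod_encode (inv_into A (op a) (fst (prod_decode z)), inv_into B (op' b) (snd (prod_decode z)))) `
         fst (qprod Q1 Q2) \<subseteq> fst (qprod Q1 Q2)"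
        using ba bb x by (auto simp: qprod_fst Q1 Q2 inv_into_into bij_betw_def)
    qed
  qed
  have cA: "op a a' \<in> A" if "a \<in> A" "a' \<in> A" for a a' using A(2) that unfolding is_quandle_def by blast
  have cB: "op' a a' \<in> B" if "a \<in> B" "a' \<in> B" for a a' using B(2) that unfolding is_quandle_def by blast
  have dA: "op a (op b c) = op (op a b) (op a c)" if "a \<in> A" "b \<in> A" "c \<in> A" for a b c
    using A(2) that unfolding is_quandle_def by blast
  have dB: "op' a (op' b c) = op' (op' a b) (op' a c)" if "a \<in> B" "b \<in> B" "c \<in> B" for a b c
    using B(2) that unfolding is_quandle_def by blast
  have iA: "op a a = a" if "a \<in> A" for a using A(2) that unfolding is_quandle_def by blast
  have iB: "op' a a = a" if "a \<in> B" for a using B(2) that unfolding is_quandle_def by blast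
  let ?P = "fst (qprod Q1 Q2)" and ?o = "snd (qprod Q1 Q2)"
  have Pc: "\<exists>a b. x = prod_encode (a,b) \<and> a \<in> A \<and> b \<in> B" if "x \<in> ?P" for x
    using that by (force simp: qprod_fst Q1 Q2)
  have o: "?o (prod_encode (a,b)) (prod_encode (a',b')) = prod_encode (op a a', op' b b')" for a b a' b'
    by (simp add: qprod_snd_enc Q1 Q2)
  have cl: "\<forall>x\<in>?P. \<forall>y\<in>?P. ?o x y \<in> ?P"
  proof (intro ballI)
    fix x y assume "x \<in> ?P" "y \<in> ?P"
    then obtain a b a' b' where "x = prod_encode (a,b)" "a \<in> A" "b \<in> B" "y = prod_encode (a',b')" "a' \<in> A" "b' \<in> B"
      using Pc by blast
    thus "?o x y \<in> ?P" using cA cB by (simp add: qprod_snd_enc qprod_fst Q1 Q2)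
  qed
  have ds: "\<forall>x\<in>?P. \<forall>y\<in>?P. \<forall>z\<in>?P. ?o x (?o y z) = ?o (?o x y) (?o x z)"
  proof (intro ballI)
    fix x y z assume "x \<in> ?P" "y \<in> ?P" "z \<in> ?P"
    then obtain a b a' b' a'' b'' where "x = prod_encode (a,b)" "a \<in> A" "b \<in> B" "y = prod_encode (a',b')" "a' \<in> A" "b' \<in> B"
       "z = prod_encode (a'',b'')" "a'' \<in> A" "b'' \<in> B"
      using Pc by metis
    thus "?o x (?o y z) = ?o (?o x y) (?o x z)" using dA[of a a' a''] dB[of b b' b''] by (simp add: qprod_snd_enc Q1 Q2)
  qed
  have idm: "\<forall>x\<in>?P. ?o x x = x"
  proof
    fix x assume "x \<in> ?P"
    then obtain a b where "x = prod_encode (a,b)" "a \<in> A" "b \<in> B" using Pc by blast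
    thus "?o x x = x" using iA[of a] iB[of b] by (simp add: qprod_snd_enc Q1 Q2)
  qed
  show ?thesis
    unfolding fin_quandle_def is_quandle_def
    using fin bij cl ds idm by blast
qed


lemma qprod_fin_left:
  assumes fq: "fin_quandle (qprod (A, op) (B, op'))" and b0: "b0 \<in> B"
  shows "fin_quandle (A, op)"
proof -
  let ?P = "prod_encode ` (A \<times> B)"
  let ?o = "snd (qprod (A, op) (B, op'))"
  have P: "fst (qprod (A, op) (B, op')) = ?P" by (simp add: qprod_fst)
  have o: "?o (prod_encode (a,b)) (prod_encode (a',b')) = prod_encode (op a a', op' b b')" for a b a' b'
    by (simp add: qprod_snd_enc)
  have Pq: "finite ?P" "is_quandle ?P ?o" using fq P by (auto simp: fin_quandle_def)
  have "finite (A \<times> B)" using Pq(1) finite_imageD inj_prod_encode by blast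
  hence finA: "finite A" using b0 finite_cartesian_productD1 by blast
  have cl: "\<forall>x\<in>?P. \<forall>y\<in>?P. ?o x y \<in> ?P" and bj: "\<forall>x\<in>?P. bij_betw (?o x) ?P ?P"
    and ds: "\<forall>x\<in>?P. \<forall>y\<in>?P. \<forall>z\<in>?P. ?o x (?o y z) = ?o (?o x y) (?o x z)"
    and id: "\<forall>x\<in>?P. ?o x x = x"
    using Pq(2) unfolding is_quandle_def by blast+
  have clA: "op a a' \<in> A" if "a \<in> A" "a' \<in> A" for a a'
  proof -
    have "?o (prod_encode (a,b0)) (prod_encode (a',b0)) \<in> ?P" using cl that b0 by blast
    thus ?thesis by (auto simp: o)
  qed
  have bjA: "bij_betw (op a) A A" if a: "a \<in> A" for a
  proof -
    have bx: "bij_betw (?o (prod_encode (a,b0))) ?P ?P" using bj a b0 by blast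
    have "inj_on (op a) A"
    proof
      fix x y assume xy: "x \<in> A" "y \<in> A" "op a x = op a y"
      have "?o (prod_encode (a,b0)) (prod_encode (x,b0)) = ?o (prod_encode (a,b0)) (prod_encode (y,b0))"
        using xy by (simp add: o)
      hence "prod_encode (x,b0) = prod_encode (y,b0)"
        using bx xy b0 unfolding bij_betw_def inj_on_def by blast
      thus "x = y" by simp
    qed
    moreover have "op a ` A = A"
    proof
      show "op a ` A \<subseteq> A" using clA a by blast
      show "A \<subseteq> op a ` A"
      proof
        fix c assume c: "c \<in> A"
        hence "prod_encode (c,b0) \<in> ?o (prod_encode (a,b0)) ` ?P" using bx b0 unfolding bij_betw_def by blast
        then obtain x y where "x \<in> A" "y \<in> B" "prod_encode (c,b0) = ?o (prod_encode (a,b0)) (prod_encode (x,y))"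
          by blast
        thus "c \<in> op a ` A" by (auto simp: o)
      qed
    qed
    ultimately show ?thesis by (simp add: bij_betw_def)
  qed
  have dsA: "op a (op b c) = op (op a b) (op a c)" if "a \<in> A" "b \<in> A" "c \<in> A" for a b c
  proof -
    have "?o (prod_encode (a,b0)) (?o (prod_encode (b,b0)) (prod_encode (c,b0))) =
          ?o (?o (prod_encode (a,b0)) (prod_encode (b,b0))) (?o (prod_encode (a,b0)) (prod_encode (c,b0)))"
      using ds that b0 by blast
    thus ?thesis by (simp add: o)
  qed
  have idA: "op a a = a" if "a \<in> A" for a
  proof -
    have "?o (prod_encode (a,b0)) (prod_encode (a,b0)) = prod_encode (a,b0)" using id that b0 by blast
    thus ?thesis by (simp add: o)
  qed
  have "finite A \<and> (\<forall>a\<in>A. \<forall>b\<in>A. op a b \<in> A) \<and> (\<forall>a\<in>A. bij_betw (op a) A A) \<and>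
     (\<forall>a\<in>A. \<forall>b\<in>A. \<forall>c\<in>A. op a (op b c) = op (op a b) (op a c)) \<and> (\<forall>a\<in>A. op a a = a)"
    using finA clA bjA dsA idA by blast
  thus ?thesis unfolding fin_quandle_def is_quandle_def fst_conv snd_conv .
qed

lemma qprod_fin_right:
  assumes fq: "fin_quandle (qprod (A, op) (B, op'))" and a0: "a0 \<in> A"
  shows "fin_quandle (B, op')"
proof -
  let ?P = "prod_encode ` (A \<times> B)"
  let ?o = "snd (qprod (A, op) (B, op'))"
  have P: "fst (qprod (A, op) (B, op')) = ?P" by (simp add: qprod_fst)
  have o: "?o (prod_encode (a,b)) (prod_encode (a',b')) = prod_encode (op a a', op' b b')" for a b a' b'
    by (simp add: qprod_snd_enc)
  have Pq: "finite ?P" "is_quandle ?P ?o" using fq P by (auto simp: fin_quandle_def)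
  have "finite (A \<times> B)" using Pq(1) finite_imageD inj_prod_encode by blast
  hence finB: "finite B" using a0 finite_cartesian_productD2 by blast
  have cl: "\<forall>x\<in>?P. \<forall>y\<in>?P. ?o x y \<in> ?P" and bj: "\<forall>x\<in>?P. bij_betw (?o x) ?P ?P"
    and ds: "\<forall>x\<in>?P. \<forall>y\<in>?P. \<forall>z\<in>?P. ?o x (?o y z) = ?o (?o x y) (?o x z)"
    and id: "\<forall>x\<in>?P. ?o x x = x"
    using Pq(2) unfolding is_quandle_def by blast+
  have clB: "op' a a' \<in> B" if "a \<in> B" "a' \<in> B" for a a'
  proof -
    have "?o (prod_encode (a0,a)) (prod_encode (a0,a')) \<in> ?P" using cl that a0 by blast
    thus ?thesis by (auto simp: o)
  qed
  have bjB: "bij_betw (op' a) B B" if a: "a \<in> B" for a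
  proof -
    have bx: "bij_betw (?o (prod_encode (a0,a))) ?P ?P" using bj a a0 by blast
    have "inj_on (op' a) B"
    proof
      fix x y assume xy: "x \<in> B" "y \<in> B" "op' a x = op' a y"
      have "?o (prod_encode (a0,a)) (prod_encode (a0,x)) = ?o (prod_encode (a0,a)) (prod_encode (a0,y))"
        using xy by (simp add: o)
      hence "prod_encode (a0,x) = prod_encode (a0,y)"
        using bx xy a0 unfolding bij_betw_def inj_on_def by blast
      thus "x = y" by simp
    qed
    moreover have "op' a ` B = B"
    proof
      show "op' a ` B \<subseteq> B" using clB a by blast
      show "B \<subseteq> op' a ` B"
      proof
        fix c assume c: "c \<in> B"
        hence "prod_encode (a0,c) \<in> ?o (prod_encode (a0,a)) ` ?P" using bx a0 unfolding bij_betw_def by blast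
        then obtain x y where "x \<in> A" "y \<in> B" "prod_encode (a0,c) = ?o (prod_encode (a0,a)) (prod_encode (x,y))"
          by blast
        thus "c \<in> op' a ` B" by (auto simp: o)
      qed
    qed
    ultimately show ?thesis by (simp add: bij_betw_def)
  qed
  have dsB: "op' a (op' b c) = op' (op' a b) (op' a c)" if "a \<in> B" "b \<in> B" "c \<in> B" for a b c
  proof -
    have "?o (prod_encode (a0,a)) (?o (prod_encode (a0,b)) (prod_encode (a0,c))) =
          ?o (?o (prod_encode (a0,a)) (prod_encode (a0,b))) (?o (prod_encode (a0,a)) (prod_encode (a0,c)))"
      using ds that a0 by blast
    thus ?thesis by (simp add: o)
  qed
  have idB: "op' a a = a" if "a \<in> B" for a
  proof -
    have "?o (prod_encode (a0,a)) (prod_encode (a0,a)) = prod_encode (a0,a)" using id that a0 by blast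
    thus ?thesis by (simp add: o)
  qed
  have "finite B \<and> (\<forall>a\<in>B. \<forall>b\<in>B. op' a b \<in> B) \<and> (\<forall>a\<in>B. bij_betw (op' a) B B) \<and>
     (\<forall>a\<in>B. \<forall>b\<in>B. \<forall>c\<in>B. op' a (op' b c) = op' (op' a b) (op' a c)) \<and> (\<forall>a\<in>B. op' a a = a)"
    using finB clB bjB dsB idB by blast
  thus ?thesis unfolding fin_quandle_def is_quandle_def fst_conv snd_conv .
qed

lemma qprod_fin_parts:
  assumes "fin_quandle (qprod X Y)" "fst X \<noteq> {}" "fst Y \<noteq> {}"
  shows "fin_quandle X" "fin_quandle Y"
  using assms qprod_fin_left[of "fst X" "snd X" "fst Y" "snd Y"] qprod_fin_right[of "fst X" "snd X" "fst Y" "snd Y"]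
  by auto

lemma empty_fin: "fst Q = {} \<Longrightarrow> fin_quandle Q"
  by (auto simp: fin_quandle_def is_quandle_def)

lemma qprod_empty: "fst X = {} \<or> fst Y = {} \<Longrightarrow> fst (qprod X Y) = {}"
  by (auto simp: qprod_fst)


lemma bnull_diff: "x \<in> bnull \<Longrightarrow> y \<in> bnull \<Longrightarrow> x - y \<in> bnull"
  by (metis bnull_add bnull_uminus diff_conv_add_uminus)

lemma bnull_cmul: "x \<in> bnull \<Longrightarrow> frag_cmul k x \<in> bnull"
  by (rule frag_closure_minus_cmul[where P="\<lambda>x. x \<in> bnull"]) (auto intro: bnull_zero bnull_diff)

lemma bnull_sum: "(\<And>i. i \<in> I \<Longrightarrow> f i \<in> bnull) \<Longrightarrow> sum f I \<in> bnull"
proof (induction I rule: infinite_finite_induct)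
  case (infinite A) then show ?case by (simp add: bnull_zero)
next
  case empty then show ?case by (simp add: bnull_zero)
next
  case (insert x F) then show ?case by (simp add: bnull_add)
qed

lemma bnull_extend: "(\<And>i. i \<in> Poly_Mapping.keys c \<Longrightarrow> h i \<in> bnull) \<Longrightarrow> frag_extend h c \<in> bnull"
  unfolding frag_extend_def by (intro bnull_sum bnull_cmul) auto

lemma bsym_empty: assumes "fst Q = {}" shows "frag_of Q \<in> bnull"
proof -
  obtain A op where Q: "Q = (A, op)" by (cases Q)
  have "A = {}" using assms Q by simp
  have "frag_of (A, op) - frag_of (A, op) - frag_of (A, op) \<in> bnull"
    using bnull_decomp[of A op "{}" "{}"] \<open>A = {}\<close> empty_fin[of "({}, op)"]
    by (simp add: subrack_def)
  hence "- (- frag_of (A, op)) \<in> bnull" using bnull_uminus by fastforce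
  thus ?thesis using Q by simp
qed

lemma frag_cmul_diff2: "frag_cmul c (a - b) = frag_cmul c a - frag_cmul c b"
  by (rule poly_mapping_eqI) (simp add: lookup_minus right_diff_distrib)

lemma frag_extend_fun_diff:
  "frag_extend (\<lambda>i. f i - g i) c = frag_extend f c - frag_extend g c"
  unfolding frag_extend_def by (simp add: frag_cmul_diff2 sum_subtractf)

lemma frag_extend_fun_zero: "frag_extend (\<lambda>i. 0) c = 0"
  by (rule frag_extend_eq_0) simp

lemma frag_extend_swap:
  "frag_extend (\<lambda>a. frag_extend (\<lambda>b. F a b) y) x = frag_extend (\<lambda>b. frag_extend (\<lambda>a. F a b) x) y"
  using subset_UNIV
proof (induction x rule: frag_induction)
  case zero
  then show ?case by (simp add: frag_extend_fun_zero)
next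
  case (one x)
  then show ?case by simp
next
  case (diff a b)
  then show ?case by (simp add: frag_extend_diff frag_extend_fun_diff)
qed

lemma frag_cmul_single: "frag_cmul c (Poly_Mapping.single z d) = Poly_Mapping.single z (c * d)"
  by (rule poly_mapping_eqI) (simp add: lookup_single when_def)

lemma frag_cmul_of: "frag_cmul c (frag_of z) = Poly_Mapping.single z c"
  by (rule poly_mapping_eqI) (simp add: lookup_single when_def)

definition bm :: "(qstr \<Rightarrow>\<^sub>0 int) \<Rightarrow> (qstr \<Rightarrow>\<^sub>0 int) \<Rightarrow> (qstr \<Rightarrow>\<^sub>0 int)" where
  "bm x y = frag_extend (\<lambda>Q. frag_extend (\<lambda>Q'. frag_of (qprod Q Q')) y) x"

lemma bmult_bm: "bmult x y = bm x y"
  unfolding bmult_def bm_def frag_extend_def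
  by (simp add: frag_cmul_sum frag_cmul_of frag_cmul_single mult.commute)

lemma bm_diff_left: "bm (a - b) y = bm a y - bm b y"
  by (simp add: bm_def frag_extend_diff)
lemma bm_diff_right: "bm x (a - b) = bm x a - bm x b"
  by (simp add: bm_def frag_extend_diff frag_extend_fun_diff)
lemma bm_add_left: "bm (a + b) y = bm a y + bm b y"
  by (simp add: bm_def frag_extend_add)
lemma bm_uminus_left: "bm (- a) y = - bm a y"
  by (simp add: bm_def frag_extend_minus)
lemma bm_zero_left: "bm 0 y = 0"
  by (simp add: bm_def)
lemma bm_of_of: "bm (frag_of Q) (frag_of Q') = frag_of (qprod Q Q')"
  by (simp add: bm_def)


lemma prod_null: assumes "\<not> fin_quandle X \<or> \<not> fin_quandle Y" shows "frag_of (qprod X Y) \<in> bnull"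
proof (cases "fst X = {} \<or> fst Y = {}")
  case True
  then show ?thesis using bsym_empty qprod_empty by blast
next
  case False
  then have "\<not> fin_quandle (qprod X Y)" using assms qprod_fin_parts by blast
  then show ?thesis by (rule bnull_junk)
qed

lemma iso_prod_null:
  assumes "fin_quandle Q" "fin_quandle Q'" "qiso Q Q'"
  shows "frag_of (qprod Q Y) - frag_of (qprod Q' Y) \<in> bnull"
proof (cases "fin_quandle Y")
  case True
  have "qiso (qprod Q Y) (qprod Q' Y)" using assms(3) qiso_refl qprod_cong by blast
  then show ?thesis using bnull_iso qprod_fin assms True by blast
next
  case False
  then show ?thesis using prod_null bnull_diff by blast
qed

lemma comm_prod_null: "frag_of (qprod Q Q') - frag_of (qprod Q' Q) \<in> bnull"
proof (cases "fin_quandle Q \<and> fin_quandle Q'")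
  case True
  then show ?thesis using bnull_iso qprod_fin qprod_comm by blast
next
  case False
  then show ?thesis using prod_null bnull_diff by blast
qed

lemma decomp_prod_null:
  assumes fq: "fin_quandle (A, op)" and S: "subrack A op S" and T: "subrack A op T"
    and ST: "S \<inter> T = {}" "S \<union> T = A"
  shows "frag_of (qprod (A, op) Y) - frag_of (qprod (S, op) Y) - frag_of (qprod (T, op) Y) \<in> bnull"
proof (cases "fin_quandle Y")
  case False
  then show ?thesis using prod_null bnull_diff by blast
next
  case True
  obtain B op' where Y: "Y = (B, op')" by (cases Y)
  have Yq: "is_quandle B op'" using True Y by (simp add: fin_quandle_def)
  define opP where "opP = (\<lambda>x y. prod_encode (op (fst (prod_decode x)) (fst (prod_decode y)),
                         op' (snd (prod_decode x)) (snd (prod_decode y))))"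
  have eq: "qprod (Z, op) Y = (prod_encode ` (Z \<times> B), opP)" for Z
    by (simp add: qprod_def Y opP_def)
  have sub: "subrack (prod_encode ` (A \<times> B)) opP (prod_encode ` (Z \<times> B))" if Z: "subrack A op Z" for Z
    unfolding subrack_def
  proof (intro conjI ballI)
    show "prod_encode ` (Z \<times> B) \<subseteq> prod_encode ` (A \<times> B)" using Z by (auto simp: subrack_def)
    fix s assume "s \<in> prod_encode ` (Z \<times> B)"
    then obtain a b where s: "s = prod_encode (a,b)" "a \<in> Z" "b \<in> B" by blast
    have za: "op a ` Z = Z" using Z s by (auto simp: subrack_def)
    have zb: "op' b ` B = B" using Yq s by (auto simp: is_quandle_def bij_betw_def)
    have "opP s ` prod_encode ` (Z \<times> B) = prod_encode ` (map_prod (op a) (op' b) ` (Z \<times> B))"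
      by (auto simp: s opP_def image_iff)
    also have "map_prod (op a) (op' b) ` (Z \<times> B) = Z \<times> B"
      using map_prod_surj_on[OF za zb] .
    finally show "opP s ` prod_encode ` (Z \<times> B) = prod_encode ` (Z \<times> B)" .
  qed
  have fP: "fin_quandle (prod_encode ` (A \<times> B), opP)" using qprod_fin[OF fq True] eq by metis
  have "frag_of (prod_encode ` (A \<times> B), opP) - frag_of (prod_encode ` (S \<times> B), opP)
        - frag_of (prod_encode ` (T \<times> B), opP) \<in> bnull"
    by (rule bnull_decomp[OF fP sub[OF S] sub[OF T]]) (use ST in auto)
  then show ?thesis by (simp add: eq)
qed

lemma bm_of_left: "bm (frag_of Q) y = frag_extend (\<lambda>Q'. frag_of (qprod Q Q')) y"
  by (simp add: bm_def)

lemma bm_null_left: "n \<in> bnull \<Longrightarrow> bm n y \<in> bnull"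
proof (induction n rule: bnull.induct)
  case bnull_zero
  then show ?case by (simp add: bm_zero_left bnull.bnull_zero)
next
  case (bnull_iso Q Q')
  have "bm (frag_of Q - frag_of Q') y = frag_extend (\<lambda>Z. frag_of (qprod Q Z) - frag_of (qprod Q' Z)) y"
    by (simp add: bm_diff_left bm_of_left frag_extend_fun_diff)
  also have "\<dots> \<in> bnull" using bnull_iso by (intro bnull_extend iso_prod_null) auto
  finally show ?case .
next
  case (bnull_decomp A op S T)
  have "bm (frag_of (A, op) - frag_of (S, op) - frag_of (T, op)) y =
     frag_extend (\<lambda>Z. frag_of (qprod (A, op) Z) - frag_of (qprod (S, op) Z) - frag_of (qprod (T, op) Z)) y"
    by (simp add: bm_diff_left bm_of_left frag_extend_fun_diff)
  also have "\<dots> \<in> bnull" using bnull_decomp by (intro bnull_extend decomp_prod_null) auto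
  finally show ?case .
next
  case (bnull_junk X)
  have "bm (frag_of X) y \<in> bnull" unfolding bm_of_left
    using bnull_junk by (intro bnull_extend prod_null) auto
  then show ?case .
next
  case (bnull_add x y)
  then show ?case by (simp add: bm_add_left bnull.bnull_add)
next
  case (bnull_uminus x)
  then show ?case by (simp add: bm_uminus_left bnull.bnull_uminus)
qed

lemma bm_comm_null: "bm x y - bm y x \<in> bnull"
proof -
  have "bm y x = frag_extend (\<lambda>a. frag_extend (\<lambda>b. frag_of (qprod b a)) y) x"
    unfolding bm_def by (rule frag_extend_swap)
  hence "bm x y - bm y x = frag_extend (\<lambda>a. frag_extend (\<lambda>b. frag_of (qprod a b) - frag_of (qprod b a)) y) x"
    by (simp add: bm_def frag_extend_fun_diff)
  also have "\<dots> \<in> bnull" by (intro bnull_extend comm_prod_null)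
  finally show ?thesis .
qed

lemma bm_null_right: "n \<in> bnull \<Longrightarrow> bm y n \<in> bnull"
proof -
  assume "n \<in> bnull"
  hence "bm n y \<in> bnull" by (rule bm_null_left)
  moreover have "bm y n - bm n y \<in> bnull" by (rule bm_comm_null)
  ultimately have "(bm y n - bm n y) + bm n y \<in> bnull" by (rule bnull_add[rotated])
  thus ?thesis by simp
qed

lemma bm_cong: "x - x' \<in> bnull \<Longrightarrow> y - y' \<in> bnull \<Longrightarrow> bm x y - bm x' y' \<in> bnull"
proof -
  assume a: "x - x' \<in> bnull" "y - y' \<in> bnull"
  have "bm x y - bm x' y' = bm (x - x') y + bm x' (y - y')"
    by (simp add: bm_diff_left bm_diff_right)
  thus ?thesis using bm_null_left[OF a(1)] bm_null_right[OF a(2)] bnull_add by simp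
qed


lemma inn_bij: "g \<in> inn_group A op \<Longrightarrow> is_quandle A op \<Longrightarrow> bij_betw g A A"
proof (induction rule: inn_group.induct)
  case inn_id
  show ?case by (simp add: bij_betw_def)
next
  case (inn_left g a)
  then have "bij_betw (op a) A A" unfolding is_quandle_def by blast
  moreover have "bij_betw g A A" using inn_left.IH inn_left.prems by blast
  ultimately show ?case using bij_betw_trans[of g A A "op a" A] by blast
next
  case (inn_left_inv g a)
  then have "bij_betw (op a) A A" unfolding is_quandle_def by blast
  then have "bij_betw (inv_into A (op a)) A A" by (rule bij_betw_inv_into)
  moreover have "bij_betw g A A" using inn_left_inv.IH inn_left_inv.prems by blast
  ultimately show ?case using bij_betw_trans[of g A A "inv_into A (op a)" A] by blast
qed

lemma subrack_fin:
  assumes "fin_quandle (A, op)" "subrack A op S" shows "fin_quandle (S, op)"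
proof -
  have q: "finite A" "is_quandle A op" using assms(1) by (auto simp: fin_quandle_def)
  have SA: "S \<subseteq> A" and img: "\<And>s. s \<in> S \<Longrightarrow> op s ` S = S" using assms(2) by (auto simp: subrack_def)
  have fin: "finite S" using SA q(1) finite_subset by blast
  have cl: "\<forall>a\<in>S. \<forall>b\<in>S. op a b \<in> S" using img by blast
  have bj: "\<forall>a\<in>S. bij_betw (op a) S S"
  proof
    fix a assume a: "a \<in> S"
    have "inj_on (op a) A" using q(2) a SA unfolding is_quandle_def bij_betw_def by blast
    hence "inj_on (op a) S" using SA inj_on_subset by blast
    thus "bij_betw (op a) S S" using img[OF a] by (simp add: bij_betw_def)
  qed
  have ds: "\<forall>a\<in>S. \<forall>b\<in>S. \<forall>c\<in>S. op a (op b c) = op (op a b) (op a c)"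
    using q(2) SA unfolding is_quandle_def by blast
  have idm: "\<forall>a\<in>S. op a a = a" using q(2) SA unfolding is_quandle_def by blast
  show ?thesis unfolding fin_quandle_def is_quandle_def fst_conv snd_conv using fin cl bj ds idm by blast
qed

lemma orbit_subracks:
  assumes fq: "fin_quandle (A, op)" and x: "x \<in> A"
  defines "Orb \<equiv> {g x | g. g \<in> inn_group A op}"
  shows "subrack A op Orb" "subrack A op (A - Orb)" "x \<in> Orb" "Orb \<subseteq> A"
proof -
  have q: "is_quandle A op" using fq by (simp add: fin_quandle_def)
  show OA: "Orb \<subseteq> A" unfolding Orb_def using inn_bij[OF _ q] x bij_betw_apply by fastforce
  show "x \<in> Orb" unfolding Orb_def using inn_group.inn_id[of A op] by (metis (mono_tags, lifting) id_apply mem_Collect_eq)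
  have imgO: "op s ` Orb = Orb" if s: "s \<in> A" for s
  proof
    show "op s ` Orb \<subseteq> Orb"
    proof
      fix z assume "z \<in> op s ` Orb"
      then obtain g where g: "g \<in> inn_group A op" "z = op s (g x)" unfolding Orb_def by blast
      have "op s \<circ> g \<in> inn_group A op" using inn_group.inn_left[OF g(1) s] .
      thus "z \<in> Orb" unfolding Orb_def using g by (intro CollectI exI[of _ "op s \<circ> g"]) auto
    qed
    show "Orb \<subseteq> op s ` Orb"
    proof
      fix z assume z: "z \<in> Orb"
      then obtain g where g: "g \<in> inn_group A op" "z = g x" unfolding Orb_def by blast
      have bs: "bij_betw (op s) A A" using q s unfolding is_quandle_def by blast
      have h: "inv_into A (op s) \<circ> g \<in> inn_group A op" using inn_group.inn_left_inv[OF g(1) s] .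
      have "z \<in> A" using z OA by blast
      hence "op s (inv_into A (op s) z) = z" using bs by (simp add: bij_betw_inv_into_right)
      moreover have "inv_into A (op s) z \<in> Orb" unfolding Orb_def using h g by (intro CollectI exI[of _ "inv_into A (op s) \<circ> g"]) auto
      ultimately show "z \<in> op s ` Orb" by force
    qed
  qed
  show "subrack A op Orb" unfolding subrack_def using OA imgO by blast
  show "subrack A op (A - Orb)" unfolding subrack_def
  proof (intro conjI ballI)
    show "A - Orb \<subseteq> A" by blast
    fix s assume s: "s \<in> A - Orb"
    have bs: "bij_betw (op s) A A" using q s unfolding is_quandle_def by blast
    have "op s ` (A - Orb) = op s ` A - op s ` Orb"
      using bs OA unfolding bij_betw_def by (intro inj_on_image_set_diff[of _ A]) auto
    also have "\<dots> = A - Orb" using bs imgO s by (simp add: bij_betw_def)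
    finally show "op s ` (A - Orb) = A - Orb" .
  qed
qed


definition rep :: "qstr set \<Rightarrow> qstr" where
  "rep c = (SOME P. prime_quandle P \<and> qclass P = c)"

definition F :: "qstr set list \<Rightarrow> qstr" where
  "F xs = foldr (\<lambda>c acc. qprod (rep c) acc) xs qsingleton"

definition R :: "qstr set multiset \<Rightarrow> qstr" where
  "R m = F (SOME xs. mset xs = m)"

definition phi :: "(qstr set multiset \<Rightarrow>\<^sub>0 int) \<Rightarrow> (qstr \<Rightarrow>\<^sub>0 int)" where
  "phi p = frag_extend (\<lambda>m. frag_of (R m)) p"

lemma rep_prime: "c \<in> Qpri \<Longrightarrow> prime_quandle (rep c) \<and> qclass (rep c) = c"
  unfolding rep_def Qpri_def by (rule someI_ex) blast

lemma rep_fin: "c \<in> Qpri \<Longrightarrow> fin_quandle (rep c)"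
  using rep_prime prime_quandle_def by blast

lemma F_Nil[simp]: "F [] = qsingleton" by (simp add: F_def)
lemma F_Cons[simp]: "F (x # xs) = qprod (rep x) (F xs)" by (simp add: F_def)

lemma F_fin: "set xs \<subseteq> Qpri \<Longrightarrow> fin_quandle (F xs)"
  by (induction xs) (auto simp: qsingleton_fin qprod_fin rep_fin)

lemma F_closed: "set xs \<subseteq> Qpri \<Longrightarrow> qclosed (F xs)"
  using F_fin fin_quandle_closed by blast

lemma F_append: "set xs \<subseteq> Qpri \<Longrightarrow> set ys \<subseteq> Qpri \<Longrightarrow> qiso (F (xs @ ys)) (qprod (F xs) (F ys))"
proof (induction xs)
  case Nil
  have "qiso (qprod qsingleton (F ys)) (F ys)" by (rule qprod_unit_left)
  moreover have "qclosed (qprod qsingleton (F ys))"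
    using qprod_closed fin_quandle_closed qsingleton_fin F_closed Nil by blast
  ultimately show ?case using qiso_sym by simp
next
  case (Cons x xs)
  have c1: "qiso (F ((x # xs) @ ys)) (qprod (rep x) (qprod (F xs) (F ys)))"
    using Cons qprod_cong qiso_refl by simp
  have "qclosed (qprod (qprod (rep x) (F xs)) (F ys))"
    using Cons qprod_closed fin_quandle_closed rep_fin F_closed by simp
  hence "qiso (qprod (rep x) (qprod (F xs) (F ys))) (qprod (qprod (rep x) (F xs)) (F ys))"
    using qiso_sym qprod_assoc by blast
  thus ?case using c1 qiso_trans by simp
qed

lemma F_append_sym: "set xs \<subseteq> Qpri \<Longrightarrow> set ys \<subseteq> Qpri \<Longrightarrow> qiso (qprod (F xs) (F ys)) (F (xs @ ys))"
  using F_append qiso_sym F_closed by (metis set_append le_sup_iff)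

lemma F_perm: "mset xs = mset ys \<Longrightarrow> set xs \<subseteq> Qpri \<Longrightarrow> qiso (F xs) (F ys)"
proof (induction xs arbitrary: ys)
  case Nil
  then show ?case by (simp add: qiso_refl)
next
  case (Cons x xs)
  have "x \<in> set ys" using Cons.prems(1) by (metis list.set_intros(1) set_mset_mset)
  then obtain ys1 ys2 where ys: "ys = ys1 @ x # ys2" by (meson split_list)
  have m: "mset xs = mset (ys1 @ ys2)" using Cons.prems(1) ys by simp
  have sets: "set ys1 \<subseteq> Qpri" "set ys2 \<subseteq> Qpri" "x \<in> Qpri" "set xs \<subseteq> Qpri"
  proof -
    have "set ys = set (x # xs)" using Cons.prems(1) by (metis set_mset_mset)
    thus "set ys1 \<subseteq> Qpri" "set ys2 \<subseteq> Qpri" "x \<in> Qpri" "set xs \<subseteq> Qpri"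
      using Cons.prems(2) ys by auto
  qed
  have i1: "qiso (F xs) (F (ys1 @ ys2))" using Cons.IH m sets by simp
  have i2: "qiso (F (ys1 @ ys2)) (qprod (F ys1) (F ys2))" using F_append sets by blast
  let ?a = "rep x" and ?A = "F ys1" and ?B = "F ys2"
  have cl: "qclosed ?a" "qclosed ?A" "qclosed ?B"
    using sets rep_fin fin_quandle_closed F_closed by auto
  have j1: "qiso (qprod ?a (qprod ?A ?B)) (qprod (qprod ?a ?A) ?B)"
    using qiso_sym[OF qprod_assoc] cl qprod_closed by blast
  have j2: "qiso (qprod (qprod ?a ?A) ?B) (qprod (qprod ?A ?a) ?B)"
    using qprod_cong[OF qprod_comm qiso_refl] .
  have j3: "qiso (qprod (qprod ?A ?a) ?B) (qprod ?A (qprod ?a ?B))" by (rule qprod_assoc)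
  have j4: "qiso (qprod ?A (F (x # ys2))) (F (ys1 @ x # ys2))"
    using F_append_sym[of ys1 "x # ys2"] sets by simp
  have "qiso (F (x # xs)) (qprod ?a (qprod ?A ?B))"
    using qprod_cong[OF qiso_refl qiso_trans[OF i1 i2]] by simp
  hence "qiso (F (x # xs)) (qprod ?A (qprod ?a ?B))"
    using j1 j2 j3 qiso_trans by blast
  thus ?case using j4 ys qiso_trans by simp
qed

lemma R_F: "\<exists>xs. mset xs = m \<and> R m = F xs"
  unfolding R_def by (metis (mono_tags, lifting) ex_mset someI_ex)

lemma R_fin: "set_mset m \<subseteq> Qpri \<Longrightarrow> fin_quandle (R m)"
  using R_F F_fin by (metis set_mset_mset)

lemma R_zero: "R {#} = qsingleton"
  using R_F[of "{#}"] by auto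

lemma R_single: "R {#c#} = qprod (rep c) qsingleton"
  using R_F[of "{#c#}"] by auto

lemma R_mult: assumes "set_mset m \<subseteq> Qpri" "set_mset m' \<subseteq> Qpri"
  shows "qiso (qprod (R m) (R m')) (R (m + m'))"
proof -
  obtain xs where xs: "mset xs = m" "R m = F xs" using R_F by blast
  obtain ys where ys: "mset ys = m'" "R m' = F ys" using R_F by blast
  obtain zs where zs: "mset zs = m + m'" "R (m + m') = F zs" using R_F by blast
  have s: "set xs \<subseteq> Qpri" "set ys \<subseteq> Qpri" using assms xs ys by auto
  have "qiso (qprod (F xs) (F ys)) (F (xs @ ys))" using F_append_sym s by blast
  moreover have "qiso (F (xs @ ys)) (F zs)" using F_perm s xs ys zs by simp
  ultimately show ?thesis using xs ys zs qiso_trans by metis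
qed


lemma phi_add: "phi (p + q) = phi p + phi q"
  by (simp add: phi_def frag_extend_add)
lemma phi_diff: "phi (p - q) = phi p - phi q"
  by (simp add: phi_def frag_extend_diff)
lemma phi_zero: "phi 0 = 0"
  by (simp add: phi_def)
lemma phi_of: "phi (frag_of m) = frag_of (R m)"
  by (simp add: phi_def)
lemma phi_one: "phi 1 = frag_of qsingleton"
  using phi_of[of "{#}"] by (simp add: R_zero)

lemma Zpri_keys: "p \<in> Zpri \<longleftrightarrow> Poly_Mapping.keys p \<subseteq> {m. set_mset m \<subseteq> Qpri}"
  unfolding Zpri_def by blast

lemma Zpri_zero: "0 \<in> Zpri" by (simp add: Zpri_def)
lemma Zpri_one: "1 \<in> Zpri" by (simp add: Zpri_def)
lemma Zpri_add: "p \<in> Zpri \<Longrightarrow> q \<in> Zpri \<Longrightarrow> p + q \<in> Zpri"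
  unfolding Zpri_keys by (rule subset_trans[OF keys_add Un_least])
lemma Zpri_diff: "p \<in> Zpri \<Longrightarrow> q \<in> Zpri \<Longrightarrow> p - q \<in> Zpri"
  unfolding Zpri_keys by (rule subset_trans[OF keys_diff Un_least])
lemma Zpri_mult: "p \<in> Zpri \<Longrightarrow> q \<in> Zpri \<Longrightarrow> p * q \<in> Zpri"
  unfolding Zpri_keys using keys_mult by fastforce
lemma Zpri_pvar: "c \<in> Qpri \<Longrightarrow> pvar c \<in> Zpri"
  by (simp add: Zpri_def pvar_def)

lemma bm_zero_right: "bm x 0 = 0"
  by (simp add: bm_def frag_extend_fun_zero)

lemma bnull_rearr: "a - c \<in> bnull \<Longrightarrow> b - d \<in> bnull \<Longrightarrow> (a - b) - (c - d) \<in> bnull"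
proof -
  assume "a - c \<in> bnull" "b - d \<in> bnull"
  hence "(a - c) - (b - d) \<in> bnull" by (rule bnull_diff)
  moreover have "(a - c) - (b - d) = (a - b) - (c - d)" by simp
  ultimately show ?thesis by simp
qed

lemma phi_mult:
  assumes "p \<in> Zpri" "q \<in> Zpri"
  shows "phi (p * q) - bm (phi p) (phi q) \<in> bnull"
proof -
  have kp: "Poly_Mapping.keys p \<subseteq> {m. set_mset m \<subseteq> Qpri}" using assms(1) Zpri_keys by blast
  have kq: "Poly_Mapping.keys q \<subseteq> {m. set_mset m \<subseteq> Qpri}" using assms(2) Zpri_keys by blast
  have single: "phi (frag_of m * q) - bm (phi (frag_of m)) (phi q) \<in> bnull" if m: "set_mset m \<subseteq> Qpri" for m
    using kq
  proof (induction q rule: frag_induction)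
    case zero
    then show ?case by (simp add: phi_zero bm_zero_right bnull_zero)
  next
    case (one m')
    have "phi (frag_of m * frag_of m') = frag_of (R (m + m'))" by (simp add: mult_single phi_of)
    moreover have "bm (phi (frag_of m)) (phi (frag_of m')) = frag_of (qprod (R m) (R m'))"
      by (simp add: phi_of bm_of_of)
    moreover have "frag_of (qprod (R m) (R m')) - frag_of (R (m + m')) \<in> bnull"
      using one m by (intro bnull_iso qprod_fin R_fin R_mult) auto
    ultimately show ?case using bnull_uminus by fastforce
  next
    case (diff a b)
    then show ?case by (simp add: right_diff_distrib phi_diff bm_diff_right bnull_rearr)
  qed
  show ?thesis using kp
  proof (induction p rule: frag_induction)
    case zero
    then show ?case by (simp add: phi_zero bm_zero_left bnull_zero)
  next
    case (one m)
    then show ?case using single by simp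
  next
    case (diff a b)
    then show ?case by (simp add: left_diff_distrib phi_diff bm_diff_left bnull_rearr)
  qed
qed

definition good :: "(qstr \<Rightarrow>\<^sub>0 int) \<Rightarrow> bool" where
  "good x \<longleftrightarrow> (\<exists>p\<in>Zpri. phi p - x \<in> bnull)"

lemma good_null: "n \<in> bnull \<Longrightarrow> good n"
  unfolding good_def using Zpri_zero bnull_uminus by (metis diff_0 phi_zero)

lemma good_diff: "good x \<Longrightarrow> good y \<Longrightarrow> good (x - y)"
  unfolding good_def
proof (elim bexE)
  fix p q assume p: "p \<in> Zpri" "phi p - x \<in> bnull" and q: "q \<in> Zpri" "phi q - y \<in> bnull"
  have "phi (p - q) - (x - y) = (phi p - phi q) - (x - y)" by (simp add: phi_diff)
  hence "phi (p - q) - (x - y) \<in> bnull" using bnull_rearr[OF p(2) q(2)] by simp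
  thus "\<exists>p\<in>Zpri. phi p - (x - y) \<in> bnull" using Zpri_diff[OF p(1) q(1)] by blast
qed

lemma good_add: "good x \<Longrightarrow> good y \<Longrightarrow> good (x + y)"
  using good_diff good_null[OF bnull_zero] by (metis diff_0 diff_minus_eq_add)

lemma good_cong: assumes "good x" "y - x \<in> bnull" shows "good y"
proof -
  have "good (x - (x - y))" using assms good_diff good_null bnull_uminus by (metis minus_diff_eq)
  thus ?thesis by simp
qed


lemma mem_qclass: "Q' \<in> qclass Q \<longleftrightarrow> fin_quandle Q' \<and> qiso Q' Q"
  by (simp add: qclass_def)

lemma rep_iso:
  assumes P: "prime_quandle P" shows "qiso (rep (qclass P)) P"
proof -
  have qc: "qclass P \<in> Qpri" using P Qpri_def by blast
  have rp: "qclass (rep (qclass P)) = qclass P" "fin_quandle (rep (qclass P))"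
    using rep_prime[OF qc] prime_quandle_def by auto
  have m: "rep (qclass P) \<in> qclass (rep (qclass P))"
    using rp(2) qiso_refl mem_qclass by blast
  have "rep (qclass P) \<in> qclass P" using m rp(1) by metis
  thus ?thesis using mem_qclass by blast
qed

lemma main_good: "fin_quandle Q \<Longrightarrow> good (frag_of Q)"
proof (induction "card (fst Q)" arbitrary: Q rule: less_induct)
  case less
  obtain A op where Q: "Q = (A, op)" by (cases Q)
  have fq: "fin_quandle (A, op)" using less.prems Q by simp
  have finA: "finite A" using fq by (simp add: fin_quandle_def)
  have IH: "\<And>Q'. card (fst Q') < card A \<Longrightarrow> fin_quandle Q' \<Longrightarrow> good (frag_of Q')"
    using less.hyps Q by simp
  show ?case
  proof (cases "A = {}")
    case True
    then show ?thesis using good_null bsym_empty Q by simp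
  next
    case Ane: False
    show ?thesis
    proof (cases "connected_rack A op")
      case False
      then obtain x y where xy: "x \<in> A" "y \<in> A" "\<forall>g\<in>inn_group A op. g x \<noteq> y"
        using Ane unfolding connected_rack_def by blast
      define Orb where "Orb = {g x | g. g \<in> inn_group A op}"
      have o: "subrack A op Orb" "subrack A op (A - Orb)" "x \<in> Orb" "Orb \<subseteq> A"
        using orbit_subracks[OF fq xy(1)] unfolding Orb_def by blast+
      have yO: "y \<notin> Orb" using xy(3) unfolding Orb_def by blast
      have "Orb \<subset> A" using o(4) yO xy(2) by blast
      hence c1: "card Orb < card A" by (rule psubset_card_mono[OF finA])
      have "A - Orb \<subset> A" using o(3) xy(1) by blast
      hence c2: "card (A - Orb) < card A" by (rule psubset_card_mono[OF finA])
      have g1: "good (frag_of (Orb, op))" using IH[of "(Orb, op)"] c1 subrack_fin[OF fq o(1)] by simp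
      have g2: "good (frag_of (A - Orb, op))" using IH[of "(A - Orb, op)"] c2 subrack_fin[OF fq o(2)] by simp
      have "frag_of (A, op) - frag_of (Orb, op) - frag_of (A - Orb, op) \<in> bnull"
        using bnull_decomp[OF fq o(1) o(2)] o(4) by blast
      hence "frag_of (A, op) - (frag_of (Orb, op) + frag_of (A - Orb, op)) \<in> bnull"
        by (simp add: diff_diff_eq)
      then show ?thesis using good_cong[OF good_add[OF g1 g2]] Q by simp
    next
      case conn: True
      show ?thesis
      proof (cases "is_singleton A")
        case True
        then obtain a where A: "A = {a}" by (auto simp: is_singleton_def)
        have "qiso (A, op) qsingleton"
          by (rule qiso_intro[where h="\<lambda>_. 0"]) (auto simp: A qsingleton_def bij_betw_def)
        hence "frag_of (A, op) - frag_of qsingleton \<in> bnull"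
          using bnull_iso fq qsingleton_fin by blast
        moreover have "good (frag_of qsingleton)"
          unfolding good_def using Zpri_one phi_one bnull_zero by force
        ultimately show ?thesis using good_cong Q by blast
      next
        case nsing: False
        show ?thesis
        proof (cases "prime_quandle Q")
          case True
          have qc: "qclass Q \<in> Qpri" using True Qpri_def by blast
          let ?c = "qclass Q"
          have rp: "prime_quandle (rep ?c)" "qclass (rep ?c) = ?c" using rep_prime[OF qc] by auto
          have rf: "fin_quandle (rep ?c)" using rp prime_quandle_def by blast
          have ri: "qiso (rep ?c) Q" using rep_iso[OF True] .
          have "phi (pvar ?c) = frag_of (qprod (rep ?c) qsingleton)"
            by (simp add: pvar_def phi_of R_single)
          moreover have "qiso (qprod (rep ?c) qsingleton) Q" using qiso_trans[OF qprod_unit_right ri] .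
          ultimately have "phi (pvar ?c) - frag_of Q \<in> bnull"
            using bnull_iso qprod_fin rf qsingleton_fin less.prems by metis
          thus ?thesis unfolding good_def using Zpri_pvar[OF qc] by blast
        next
          case False
          then obtain Q1 Q2 where q12: "is_quandle (fst Q1) (snd Q1)" "is_quandle (fst Q2) (snd Q2)"
            "qiso Q (qprod Q1 Q2)" "\<not> is_singleton (fst Q1)" "\<not> is_singleton (fst Q2)"
            using less.prems conn nsing Q unfolding prime_quandle_def by auto
          obtain f where f: "bij_betw f A (prod_encode ` (fst Q1 \<times> fst Q2))"
            using q12(3) Q unfolding qiso_def qprod_fst by auto
          have cardA: "card A = card (fst Q1 \<times> fst Q2)"
            using bij_betw_same_card[OF f] card_image[OF inj_prod_encode] by simp
          have ne: "fst Q1 \<times> fst Q2 \<noteq> {}" using f Ane by (auto simp: bij_betw_def)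
          hence ne1: "fst Q1 \<noteq> {}" and ne2: "fst Q2 \<noteq> {}" by auto
          have "finite (prod_encode ` (fst Q1 \<times> fst Q2))" using f finA bij_betw_finite by blast
          hence "finite (fst Q1 \<times> fst Q2)" using finite_imageD inj_prod_encode by blast
          hence fin1: "finite (fst Q1)" and fin2: "finite (fst Q2)"
            using ne1 ne2 finite_cartesian_productD1 finite_cartesian_productD2 by blast+
          have fq1: "fin_quandle Q1" using fin1 q12(1) by (simp add: fin_quandle_def)
          have fq2: "fin_quandle Q2" using fin2 q12(2) by (simp add: fin_quandle_def)
          have k1: "card (fst Q1) \<ge> 2" using fin1 ne1 q12(4) is_singleton_altdef
            by (metis One_nat_def card_0_eq less_2_cases not_less)
          have k2: "card (fst Q2) \<ge> 2" using fin2 ne2 q12(5) is_singleton_altdef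
            by (metis One_nat_def card_0_eq less_2_cases not_less)
          have cA: "card A = card (fst Q1) * card (fst Q2)" using cardA card_cartesian_product by simp
          have "card (fst Q1) * 2 \<le> card (fst Q1) * card (fst Q2)" by (rule mult_le_mono2[OF k2])
          hence lt1: "card (fst Q1) < card A" using cA k1 by linarith
          have "2 * card (fst Q2) \<le> card (fst Q1) * card (fst Q2)" by (rule mult_le_mono1[OF k1])
          hence lt2: "card (fst Q2) < card A" using cA k2 by linarith
          obtain p1 where p1: "p1 \<in> Zpri" "phi p1 - frag_of Q1 \<in> bnull" using IH[OF lt1 fq1] good_def by blast
          obtain p2 where p2: "p2 \<in> Zpri" "phi p2 - frag_of Q2 \<in> bnull" using IH[OF lt2 fq2] good_def by blast
          have a1: "phi (p1 * p2) - bm (phi p1) (phi p2) \<in> bnull" using phi_mult p1 p2 by blast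
          have a2: "bm (phi p1) (phi p2) - frag_of (qprod Q1 Q2) \<in> bnull"
            using bm_cong[OF p1(2) p2(2)] by (simp add: bm_of_of)
          have a3: "frag_of (qprod Q1 Q2) - frag_of Q \<in> bnull"
            using bnull_iso[OF qprod_fin[OF fq1 fq2] less.prems] q12(3) qiso_sym fin_quandle_closed less.prems
            by blast
          have "phi (p1 * p2) - frag_of Q = (phi (p1 * p2) - bm (phi p1) (phi p2))
              + (bm (phi p1) (phi p2) - frag_of (qprod Q1 Q2)) + (frag_of (qprod Q1 Q2) - frag_of Q)"
            by simp
          hence "phi (p1 * p2) - frag_of Q \<in> bnull" using a1 a2 a3 bnull_add by metis
          thus ?thesis unfolding good_def using Zpri_mult[OF p1(1) p2(1)] by blast
        qed
      qed
    qed
  qed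
qed

lemma all_good: "good x"
  using subset_UNIV
proof (induction x rule: frag_induction)
  case zero
  then show ?case using good_null bnull_zero by blast
next
  case (one X)
  then show ?case using main_good good_null bnull_junk by blast
next
  case (diff a b)
  then show ?case using good_diff by blast
qed

theorem theorem7p9:
  "\<exists>\<phi> :: (qstr set multiset \<Rightarrow>\<^sub>0 int) \<Rightarrow> (qstr \<Rightarrow>\<^sub>0 int).
     (\<forall>p\<in>Zpri. \<forall>q\<in>Zpri. \<phi> (p + q) - (\<phi> p + \<phi> q) \<in> bnull) \<and>
     (\<forall>p\<in>Zpri. \<forall>q\<in>Zpri. \<phi> (p * q) - bmult (\<phi> p) (\<phi> q) \<in> bnull) \<and>
     \<phi> 1 - bsym qsingleton \<in> bnull \<and>
     (\<forall>P. prime_quandle P \<longrightarrow> \<phi> (pvar (qclass P)) - bsym P \<in> bnull) \<and>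
     (\<forall>x. \<exists>p\<in>Zpri. \<phi> p - x \<in> bnull)"
proof (intro exI[of _ phi] conjI allI ballI impI)
  fix p q assume "p \<in> Zpri" "q \<in> Zpri"
  show "phi (p + q) - (phi p + phi q) \<in> bnull" by (simp add: phi_add bnull_zero)
  show "phi (p * q) - bmult (phi p) (phi q) \<in> bnull" using phi_mult \<open>p \<in> Zpri\<close> \<open>q \<in> Zpri\<close> by (simp add: bmult_bm)
next
  show "phi 1 - bsym qsingleton \<in> bnull" by (simp add: phi_one bsym_def bnull_zero)
next
  fix P assume P: "prime_quandle P"
  have "good (frag_of P)" using main_good P prime_quandle_def by blast
  show "phi (pvar (qclass P)) - bsym P \<in> bnull"
  proof -
    let ?c = "qclass P"
    have qc: "?c \<in> Qpri" using P Qpri_def by blast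
    have rp: "qclass (rep ?c) = ?c" "fin_quandle (rep ?c)" using rep_prime[OF qc] prime_quandle_def by auto
    have ri: "qiso (rep ?c) P" using rep_iso[OF P] .
    have "phi (pvar ?c) = frag_of (qprod (rep ?c) qsingleton)"
      by (simp add: pvar_def phi_of R_single)
    moreover have "qiso (qprod (rep ?c) qsingleton) P" using qiso_trans[OF qprod_unit_right ri] .
    moreover have "fin_quandle P" using P prime_quandle_def by blast
    ultimately show ?thesis using bnull_iso qprod_fin rp(2) qsingleton_fin by (metis bsym_def)
  qed
next
  fix x
  show "\<exists>p\<in>Zpri. phi p - x \<in> bnull" using all_good good_def by blast
qed

end
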